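(* Let $G$ be a graph with a clique cutset $C$, and let $V(G)\setminus C$ be partitioned into two sets $V_1,V_2$ such that there are no edges between $V_1$ and $V_2$. If $G[C\cup V_1]$ is perfect, then $G$ is not minimally non-perfectly divisible.
   Context: All graphs are finite and simple. For $S\subseteq V(G)$, $G[S]$ is the subgraph induced by $S$. $\omega(G)$ is the number of vertices in a largest clique of $G$ and $\chi(G)$ the chromatic number. A graph $G$ is perfect if $\chi(H)=\omega(H)$ for every induced subgraph $H$ of $G$. A partition $(A,B)$ of $V(G)$ is good if $G[A]$ is perfect and $\omega(G[B])<\omega(G)$. A graph $G$ is perfectly divisible if every induced subgraph $H$ of $G$ with at least one edge admits a good partition (of $V(H)$). A graph is minimally non-perfectly divisible if it is not perfectly divisible but each of its proper induced subgraphs is perfectly divisible. A set $C\subseteq V(G)$ is a clique cutset if $C$ induces a clique in $G$ and $G-C$ is disconnected. *)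

theory Defs
  imports Main
begin

text \<open>Induced subgraphs G[S] (S a subset of V) are
represented by the vertex set S together with the same relation E.\<close>

definition simple_graph :: "'a set \<Rightarrow> ('a \<Rightarrow> 'a \<Rightarrow> bool) \<Rightarrow> bool" where
  "simple_graph V E \<longleftrightarrow> finite V \<and> (\<forall>x y. E x y \<longrightarrow> E y x) \<and> (\<forall>x. \<not> E x x)"

definition is_clique :: "('a \<Rightarrow> 'a \<Rightarrow> bool) \<Rightarrow> 'a set \<Rightarrow> 'a set \<Rightarrow> bool" where
  "is_clique E S K \<longleftrightarrow> K \<subseteq> S \<and> (\<forall>x\<in>K. \<forall>y\<in>K. x \<noteq> y \<longrightarrow> E x y)"

definition clique_number :: "('a \<Rightarrow> 'a \<Rightarrow> bool) \<Rightarrow> 'a set \<Rightarrow> nat" where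
  "clique_number E S = Max {card K | K. is_clique E S K}"

definition is_colouring :: "('a \<Rightarrow> 'a \<Rightarrow> bool) \<Rightarrow> 'a set \<Rightarrow> nat \<Rightarrow> ('a \<Rightarrow> nat) \<Rightarrow> bool" where
  "is_colouring E S k f \<longleftrightarrow> (\<forall>x\<in>S. f x < k) \<and> (\<forall>x\<in>S. \<forall>y\<in>S. E x y \<longrightarrow> f x \<noteq> f y)"

definition chromatic_number :: "('a \<Rightarrow> 'a \<Rightarrow> bool) \<Rightarrow> 'a set \<Rightarrow> nat" where
  "chromatic_number E S = (LEAST k. \<exists>f. is_colouring E S k f)"

definition perfect :: "('a \<Rightarrow> 'a \<Rightarrow> bool) \<Rightarrow> 'a set \<Rightarrow> bool" where
  "perfect E S \<longleftrightarrow> (\<forall>H \<subseteq> S. chromatic_number E H = clique_number E H)"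

definition good_partition :: "('a \<Rightarrow> 'a \<Rightarrow> bool) \<Rightarrow> 'a set \<Rightarrow> 'a set \<Rightarrow> 'a set \<Rightarrow> bool" where
  "good_partition E S A B \<longleftrightarrow> A \<union> B = S \<and> A \<inter> B = {} \<and> perfect E A
     \<and> clique_number E B < clique_number E S"

definition has_edge :: "('a \<Rightarrow> 'a \<Rightarrow> bool) \<Rightarrow> 'a set \<Rightarrow> bool" where
  "has_edge E S \<longleftrightarrow> (\<exists>x\<in>S. \<exists>y\<in>S. E x y)"

definition perfectly_divisible :: "('a \<Rightarrow> 'a \<Rightarrow> bool) \<Rightarrow> 'a set \<Rightarrow> bool" where
  "perfectly_divisible E S \<longleftrightarrow>
     (\<forall>H \<subseteq> S. has_edge E H \<longrightarrow> (\<exists>A B. good_partition E H A B))"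

definition minimally_non_perfectly_divisible :: "('a \<Rightarrow> 'a \<Rightarrow> bool) \<Rightarrow> 'a set \<Rightarrow> bool" where
  "minimally_non_perfectly_divisible E S \<longleftrightarrow>
     \<not> perfectly_divisible E S \<and> (\<forall>H. H \<subset> S \<longrightarrow> perfectly_divisible E H)"

definition graph_connected :: "('a \<Rightarrow> 'a \<Rightarrow> bool) \<Rightarrow> 'a set \<Rightarrow> bool" where
  "graph_connected E S \<longleftrightarrow>
     (\<forall>x\<in>S. \<forall>y\<in>S. (x, y) \<in> {(u, v). u \<in> S \<and> v \<in> S \<and> E u v}\<^sup>*)"

definition clique_cutset :: "'a set \<Rightarrow> ('a \<Rightarrow> 'a \<Rightarrow> bool) \<Rightarrow> 'a set \<Rightarrow> bool" where
  "clique_cutset V E C \<longleftrightarrow> is_clique E V C \<and> \<not> graph_connected E (V - C)"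

end

theory Submission
  imports Defs
begin

lemma colouring_exists:
  assumes "finite H" "\<forall>x. \<not> E x x"
  shows "\<exists>f. is_colouring E H (card H) f"
proof -
  obtain h where h: "bij_betw h H {0..<card H}" using ex_bij_betw_finite_nat[OF assms(1)] by blast
  have "is_colouring E H (card H) h"
    unfolding is_colouring_def using h assms(2)
    by (auto simp: bij_betw_def inj_on_def)
  thus ?thesis by blast
qed

lemma chi_colouring:
  assumes "finite H" "\<forall>x. \<not> E x x"
  shows "is_colouring E H (chromatic_number E H) (SOME f. is_colouring E H (chromatic_number E H) f)"
proof -
  have "\<exists>f. is_colouring E H (chromatic_number E H) f"
    unfolding chromatic_number_def
    by (rule LeastI_ex) (use colouring_exists[where E=E, OF assms] in blast)
  thus ?thesis by (rule someI_ex)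
qed

lemma chi_le: "is_colouring E H k f \<Longrightarrow> chromatic_number E H \<le> k"
  unfolding chromatic_number_def by (rule Least_le) blast

lemma clique_fin:
  assumes "finite H"
  shows "finite {card K | K. is_clique E H K}" "{card K | K. is_clique E H K} \<noteq> {}"
proof -
  have "{card K | K. is_clique E H K} \<subseteq> card ` Pow H" unfolding is_clique_def by auto
  thus "finite {card K | K. is_clique E H K}" by (rule finite_subset) (use assms in simp)
  have "is_clique E H {}" unfolding is_clique_def by auto
  thus "{card K | K. is_clique E H K} \<noteq> {}" by blast
qed

lemma clique_le: "finite H \<Longrightarrow> is_clique E H K \<Longrightarrow> card K \<le> clique_number E H"
  unfolding clique_number_def using clique_fin by (intro Max_ge) auto

lemma clique_ex: "finite H \<Longrightarrow> \<exists>K. is_clique E H K \<and> card K = clique_number E H"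
proof -
  assume "finite H"
  then have "clique_number E H \<in> {card K | K. is_clique E H K}"
    unfolding clique_number_def using clique_fin[where E=E, OF \<open>finite H\<close>] by (intro Max_in) auto
  thus ?thesis by auto
qed

lemma clique_mono:
  assumes "finite H'" "H \<subseteq> H'"
  shows "clique_number E H \<le> clique_number E H'"
proof -
  obtain K where K: "is_clique E H K" "card K = clique_number E H"
    using clique_ex assms finite_subset by metis
  have "is_clique E H' K" using K(1) assms(2) unfolding is_clique_def by auto
  thus ?thesis using K(2) clique_le assms(1) by metis
qed

lemma omega_le_chi:
  assumes "finite H" "\<forall>x. \<not> E x x"
  shows "clique_number E H \<le> chromatic_number E H"
proof -
  define k where "k = chromatic_number E H"
  obtain f where f: "is_colouring E H k f" using chi_colouring[where E=E, OF assms] k_def by blast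
  obtain K where K: "is_clique E H K" "card K = clique_number E H"
    using clique_ex assms by metis
  have "inj_on f K" using f K(1) unfolding inj_on_def is_colouring_def is_clique_def by blast
  moreover have "f ` K \<subseteq> {0..<k}" using f K(1) unfolding is_colouring_def is_clique_def by auto
  ultimately have "card K \<le> card {0..<k}" by (metis card_inj_on_le finite_atLeastLessThan)
  thus ?thesis using K k_def by simp
qed

lemma inj_extend:
  assumes "D \<subseteq> {0..<(m::nat)}" "inj_on \<phi> D" "\<phi> ` D \<subseteq> {0..<m}"
  shows "\<exists>\<pi>. inj_on \<pi> {0..<m} \<and> \<pi> ` {0..<m} \<subseteq> {0..<m} \<and> (\<forall>c\<in>D. \<pi> c = \<phi> c)"
proof -
  have fD: "finite D" by (rule finite_subset[OF assms(1)]) simp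
  have "card ({0..<m} - D) = card ({0..<m} - \<phi> ` D)"
    using assms fD by (simp add: card_Diff_subset card_image)
  then obtain \<psi> where psi: "bij_betw \<psi> ({0..<m} - D) ({0..<m} - \<phi> ` D)"
    using finite_same_card_bij by blast
  define \<pi> where "\<pi> c = (if c \<in> D then \<phi> c else \<psi> c)" for c
  have "inj_on \<pi> {0..<m}"
    unfolding inj_on_def \<pi>_def
  proof (intro ballI impI)
    fix x y assume xy: "x \<in> {0..<m}" "y \<in> {0..<m}"
      "(if x \<in> D then \<phi> x else \<psi> x) = (if y \<in> D then \<phi> y else \<psi> y)"
    show "x = y"
    proof (cases "x \<in> D"; cases "y \<in> D")
      assume "x \<in> D" "y \<in> D" thus ?thesis using xy assms(2) by (auto simp: inj_on_def)
    next
      assume "x \<in> D" "y \<notin> D"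
      then have "y \<in> {0..<m} - D" using xy(2) by blast
      then have "\<psi> y \<in> \<psi> ` ({0..<m} - D)" by blast
      then have "\<psi> y \<in> {0..<m} - \<phi> ` D" using psi by (simp add: bij_betw_def)
      moreover have "\<phi> x \<in> \<phi> ` D" using \<open>x \<in> D\<close> by blast
      ultimately show ?thesis using xy(3) \<open>x \<in> D\<close> \<open>y \<notin> D\<close> by (metis Diff_iff)
    next
      assume "x \<notin> D" "y \<in> D"
      then have "x \<in> {0..<m} - D" using xy(1) by blast
      then have "\<psi> x \<in> \<psi> ` ({0..<m} - D)" by blast
      then have "\<psi> x \<in> {0..<m} - \<phi> ` D" using psi by (simp add: bij_betw_def)
      moreover have "\<phi> y \<in> \<phi> ` D" using \<open>y \<in> D\<close> by blast
      ultimately show ?thesis using xy(3) \<open>x \<notin> D\<close> \<open>y \<in> D\<close> by (metis Diff_iff)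
    next
      assume "x \<notin> D" "y \<notin> D" thus ?thesis using xy psi by (auto simp: bij_betw_def inj_on_def)
    qed
  qed
  moreover have "\<pi> ` {0..<m} \<subseteq> {0..<m}"
    using assms(3) psi unfolding \<pi>_def bij_betw_def by auto
  moreover have "\<forall>c\<in>D. \<pi> c = \<phi> c" unfolding \<pi>_def by simp
  ultimately show ?thesis by blast
qed

lemma glue_chi:
  assumes fin: "finite (P \<union> Q)" and irr: "\<forall>x. \<not> E x x"
    and cP: "chromatic_number E P = clique_number E P"
    and cQ: "chromatic_number E Q = clique_number E Q"
    and cl: "is_clique E (P \<union> Q) (P \<inter> Q)"
    and ne: "\<forall>x\<in>P - Q. \<forall>y\<in>Q - P. \<not> E x y \<and> \<not> E y x"
  shows "chromatic_number E (P \<union> Q) = clique_number E (P \<union> Q)"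
proof -
  define m where "m = max (clique_number E P) (clique_number E Q)"
  have fP: "finite P" and fQ: "finite Q" using fin by auto
  have "is_colouring E P (clique_number E P) (SOME f. is_colouring E P (chromatic_number E P) f)"
    using chi_colouring[where E=E, OF fP irr] cP by simp
  then obtain f where f: "is_colouring E P (clique_number E P) f" by blast
  have "is_colouring E Q (clique_number E Q) (SOME f. is_colouring E Q (chromatic_number E Q) f)"
    using chi_colouring[where E=E, OF fQ irr] cQ by simp
  then obtain g where g: "is_colouring E Q (clique_number E Q) g" by blast
  have fb: "f x < clique_number E P" if "x \<in> P" for x using f that unfolding is_colouring_def by blast
  have fe: "f x \<noteq> f y" if "x \<in> P" "y \<in> P" "E x y" for x y using f that unfolding is_colouring_def by blast
  have gb: "g x < clique_number E Q" if "x \<in> Q" for x using g that unfolding is_colouring_def by blast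
  have ge: "g x \<noteq> g y" if "x \<in> Q" "y \<in> Q" "E x y" for x y using g that unfolding is_colouring_def by blast
  define K where "K = P \<inter> Q"
  have clK: "E x y" if "x \<in> K" "y \<in> K" "x \<noteq> y" for x y using cl that unfolding K_def is_clique_def by blast
  have injg: "inj_on g K" unfolding inj_on_def
  proof (intro ballI impI)
    fix x y assume "x \<in> K" "y \<in> K" "g x = g y"
    thus "x = y" using clK ge unfolding K_def by blast
  qed
  have injf: "inj_on f K" unfolding inj_on_def
  proof (intro ballI impI)
    fix x y assume "x \<in> K" "y \<in> K" "f x = f y"
    thus "x = y" using clK fe unfolding K_def by blast
  qed
  define \<phi> where "\<phi> c = f (inv_into K g c)" for c
  have phig: "\<phi> (g x) = f x" if "x \<in> K" for x using injg that unfolding \<phi>_def by simp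
  have "inj_on \<phi> (g ` K)" unfolding inj_on_def
  proof (intro ballI impI)
    fix a b assume "a \<in> g ` K" "b \<in> g ` K" "\<phi> a = \<phi> b"
    then obtain x y where "x \<in> K" "y \<in> K" "a = g x" "b = g y" "\<phi> a = \<phi> b" by blast
    then have "f x = f y" using phig by simp
    then have "x = y" using injf \<open>x \<in> K\<close> \<open>y \<in> K\<close> unfolding inj_on_def by blast
    thus "a = b" using \<open>a = g x\<close> \<open>b = g y\<close> by simp
  qed
  moreover have "g ` K \<subseteq> {0..<m}"
  proof
    fix c assume "c \<in> g ` K"
    then obtain x where "x \<in> K" "c = g x" by blast
    thus "c \<in> {0..<m}" using gb[of x] unfolding K_def m_def by auto
  qed
  moreover have "\<phi> ` g ` K \<subseteq> {0..<m}"
  proof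
    fix c assume "c \<in> \<phi> ` g ` K"
    then obtain x where "x \<in> K" "c = \<phi> (g x)" by blast
    thus "c \<in> {0..<m}" using fb[of x] phig[of x] unfolding K_def m_def by auto
  qed
  ultimately obtain \<pi> where pi: "inj_on \<pi> {0..<m}" "\<pi> ` {0..<m} \<subseteq> {0..<m}" "\<forall>c\<in>g ` K. \<pi> c = \<phi> c"
    using inj_extend[of "g ` K" m \<phi>] by blast
  define h where "h x = (if x \<in> P then f x else \<pi> (g x))" for x
  have hQ: "h x = \<pi> (g x)" if "x \<in> Q" for x
  proof (cases "x \<in> P")
    case True
    then have "x \<in> K" using that unfolding K_def by blast
    then show ?thesis using True phig[of x] pi(3) unfolding h_def by simp
  next
    case False thus ?thesis unfolding h_def by simp
  qed
  have gm: "g x \<in> {0..<m}" if "x \<in> Q" for x using gb[OF that] unfolding m_def by auto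
  have "is_colouring E (P \<union> Q) m h"
    unfolding is_colouring_def
  proof (intro conjI ballI impI)
    fix x assume x: "x \<in> P \<union> Q"
    show "h x < m"
    proof (cases "x \<in> P")
      case True thus ?thesis using fb[OF True] unfolding h_def m_def by simp
    next
      case False
      then have "x \<in> Q" using x by blast
      then have "\<pi> (g x) \<in> {0..<m}" using gm pi(2) by blast
      thus ?thesis using False unfolding h_def by simp
    qed
  next
    fix x y assume xy: "x \<in> P \<union> Q" "y \<in> P \<union> Q" "E x y"
    show "h x \<noteq> h y"
    proof (cases "x \<in> P \<and> y \<in> P")
      case True thus ?thesis using fe xy unfolding h_def by simp
    next
      case False
      have xQ: "x \<in> Q" and yQ: "y \<in> Q"
      proof -
        show "x \<in> Q"
        proof (rule ccontr)
          assume "x \<notin> Q"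
          then have "x \<in> P - Q" using xy by blast
          moreover have "y \<in> Q - P" using False xy \<open>x \<notin> Q\<close> by blast
          ultimately show False using ne xy(3) by blast
        qed
        show "y \<in> Q"
        proof (rule ccontr)
          assume "y \<notin> Q"
          then have "y \<in> P - Q" using xy by blast
          moreover have "x \<in> Q - P" using False xy \<open>y \<notin> Q\<close> by blast
          ultimately show False using ne xy(3) by blast
        qed
      qed
      have "g x \<noteq> g y" using ge xQ yQ xy(3) by blast
      then have "\<pi> (g x) \<noteq> \<pi> (g y)" using pi(1) gm[OF xQ] gm[OF yQ] unfolding inj_on_def by blast
      thus ?thesis using hQ[OF xQ] hQ[OF yQ] by simp
    qed
  qed
  then have "chromatic_number E (P \<union> Q) \<le> m" by (rule chi_le)
  moreover have "m \<le> clique_number E (P \<union> Q)"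
    unfolding m_def using clique_mono[OF fin] by simp
  moreover have "clique_number E (P \<union> Q) \<le> chromatic_number E (P \<union> Q)"
    using omega_le_chi[where E=E, OF fin irr] .
  ultimately show ?thesis by linarith
qed

lemma perfect_sub: "perfect E S \<Longrightarrow> T \<subseteq> S \<Longrightarrow> perfect E T"
  unfolding perfect_def by blast

lemma glue_perfect:
  assumes fin: "finite (P \<union> Q)" and irr: "\<forall>x. \<not> E x x"
    and pP: "perfect E P" and pQ: "perfect E Q"
    and cl: "is_clique E (P \<union> Q) (P \<inter> Q)"
    and ne: "\<forall>x\<in>P - Q. \<forall>y\<in>Q - P. \<not> E x y \<and> \<not> E y x"
  shows "perfect E (P \<union> Q)"
  unfolding perfect_def
proof (intro allI impI)
  fix H assume H: "H \<subseteq> P \<union> Q"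
  have eq: "H = (H \<inter> P) \<union> (H \<inter> Q)" using H by blast
  have "chromatic_number E ((H \<inter> P) \<union> (H \<inter> Q)) = clique_number E ((H \<inter> P) \<union> (H \<inter> Q))"
  proof (rule glue_chi)
    show "finite (H \<inter> P \<union> H \<inter> Q)" by (rule finite_subset[OF _ fin]) blast
    show "chromatic_number E (H \<inter> P) = clique_number E (H \<inter> P)" using pP unfolding perfect_def by blast
    show "chromatic_number E (H \<inter> Q) = clique_number E (H \<inter> Q)" using pQ unfolding perfect_def by blast
    show "is_clique E (H \<inter> P \<union> H \<inter> Q) (H \<inter> P \<inter> (H \<inter> Q))" using cl unfolding is_clique_def by blast
    show "\<forall>x\<in>H \<inter> P - H \<inter> Q. \<forall>y\<in>H \<inter> Q - H \<inter> P. \<not> E x y \<and> \<not> E y x" using ne by blast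
  qed (rule irr)
  thus "chromatic_number E H = clique_number E H" using eq by simp
qed

theorem lemma4:
  fixes V :: "'a set" and E :: "'a \<Rightarrow> 'a \<Rightarrow> bool" and C V1 V2 :: "'a set"
  assumes "simple_graph V E"
    and "clique_cutset V E C"
    and "V1 \<union> V2 = V - C" and "V1 \<inter> V2 = {}" and "V1 \<noteq> {}" and "V2 \<noteq> {}"
    and "\<forall>x\<in>V1. \<forall>y\<in>V2. \<not> E x y"
    and "perfect E (C \<union> V1)"
  shows "\<not> minimally_non_perfectly_divisible E V"
proof
  assume mn: "minimally_non_perfectly_divisible E V"
  have fin: "finite V" and sym: "\<forall>x y. E x y \<longrightarrow> E y x" and irr: "\<forall>x. \<not> E x x"
    using assms(1) unfolding simple_graph_def by blast+
  have Ccl: "is_clique E V C" using assms(2) unfolding clique_cutset_def by blast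
  then have CV: "C \<subseteq> V" unfolding is_clique_def by blast
  obtain H where H: "H \<subseteq> V" "has_edge E H" "\<not> (\<exists>A B. good_partition E H A B)"
    using mn unfolding minimally_non_perfectly_divisible_def perfectly_divisible_def by blast
  have "H = V"
  proof (rule ccontr)
    assume "H \<noteq> V"
    then have "perfectly_divisible E H" using mn H(1)
      unfolding minimally_non_perfectly_divisible_def by blast
    thus False using H unfolding perfectly_divisible_def by blast
  qed
  with H have edgeV: "has_edge E V" and nogood: "\<not> (\<exists>A B. good_partition E V A B)" by auto
  define W where "W = C \<union> V2"
  have "W \<subset> V" using assms(3-5) CV unfolding W_def by blast
  then have pdW: "perfectly_divisible E W" using mn unfolding minimally_non_perfectly_divisible_def by blast
  show False
  proof (cases "has_edge E W")
    case True
    then obtain A2 B2 where gp: "good_partition E W A2 B2" using pdW unfolding perfectly_divisible_def by blast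
    have gU: "A2 \<union> B2 = W" and gI: "A2 \<inter> B2 = {}" and gA: "perfect E A2"
      and gw: "clique_number E B2 < clique_number E W"
      using gp unfolding good_partition_def by auto
    have A2W: "A2 \<subseteq> W" using gU by blast
    have V1V: "V1 \<subseteq> V" using assms(3) by blast
    have WV: "W \<subseteq> V" using \<open>W \<subset> V\<close> by blast
    have "good_partition E V (A2 \<union> V1) B2"
      unfolding good_partition_def
    proof (intro conjI)
      show "A2 \<union> V1 \<union> B2 = V" using gU assms(3) CV unfolding W_def by blast
      show "(A2 \<union> V1) \<inter> B2 = {}" using gU gI assms(3,4) unfolding W_def by blast
      have "perfect E ((A2 \<inter> C \<union> V1) \<union> A2)"
      proof (rule glue_perfect)
        have "A2 \<inter> C \<union> V1 \<union> A2 \<subseteq> V" using A2W WV V1V by blast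
        then show "finite (A2 \<inter> C \<union> V1 \<union> A2)" by (rule finite_subset[OF _ fin])
        have "A2 \<inter> C \<union> V1 \<subseteq> C \<union> V1" by blast
        then show "perfect E (A2 \<inter> C \<union> V1)" by (rule perfect_sub[OF assms(8)])
        show "perfect E A2" by (rule gA)
        have "(A2 \<inter> C \<union> V1) \<inter> A2 \<subseteq> C" using A2W assms(3,4) unfolding W_def by blast
        moreover have Cc: "\<forall>x\<in>C. \<forall>y\<in>C. x \<noteq> y \<longrightarrow> E x y" using Ccl unfolding is_clique_def by blast
        ultimately have "\<forall>x\<in>(A2 \<inter> C \<union> V1) \<inter> A2. \<forall>y\<in>(A2 \<inter> C \<union> V1) \<inter> A2. x \<noteq> y \<longrightarrow> E x y"
          by (meson subsetD)
        then show "is_clique E (A2 \<inter> C \<union> V1 \<union> A2) ((A2 \<inter> C \<union> V1) \<inter> A2)"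
          unfolding is_clique_def by (intro conjI) auto
        show "\<forall>x\<in>A2 \<inter> C \<union> V1 - A2. \<forall>y\<in>A2 - (A2 \<inter> C \<union> V1). \<not> E x y \<and> \<not> E y x"
        proof (intro ballI)
          fix x y assume x: "x \<in> A2 \<inter> C \<union> V1 - A2" and y: "y \<in> A2 - (A2 \<inter> C \<union> V1)"
          have "x \<in> V1" using x by blast
          moreover have "y \<in> V2" using y A2W unfolding W_def by blast
          ultimately have "\<not> E x y" using assms(7) by blast
          moreover have "\<not> E y x" using \<open>\<not> E x y\<close> sym by blast
          ultimately show "\<not> E x y \<and> \<not> E y x" by blast
        qed
      qed (rule irr)
      moreover have "A2 \<inter> C \<union> V1 \<union> A2 = A2 \<union> V1" by blast
      ultimately show "perfect E (A2 \<union> V1)" by simp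
      have "clique_number E W \<le> clique_number E V"
        using clique_mono[OF fin WV] .
      thus "clique_number E B2 < clique_number E V" using gw by linarith
    qed
    thus False using nogood by blast
  next
    case False
    have "good_partition E V (C \<union> V1) V2"
      unfolding good_partition_def
    proof (intro conjI)
      show "C \<union> V1 \<union> V2 = V" using assms(3) CV by blast
      show "(C \<union> V1) \<inter> V2 = {}" using assms(3,4) by blast
      show "perfect E (C \<union> V1)" by (rule assms(8))
      obtain x y where xy: "x \<in> V" "y \<in> V" "E x y" using edgeV unfolding has_edge_def by blast
      have "x \<noteq> y"
      proof
        assume "x = y" then show False using irr xy(3) by simp
      qed
      have "E y x" using sym xy(3) by blast
      have "is_clique E V {x, y}" using xy \<open>E y x\<close> unfolding is_clique_def by auto
      then have "card {x, y} \<le> clique_number E V" by (rule clique_le[OF fin])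
      then have two: "2 \<le> clique_number E V" using \<open>x \<noteq> y\<close> by simp
      have fV2: "finite V2" by (rule finite_subset[OF _ fin]) (use assms(3) in blast)
      obtain K where K: "is_clique E V2 K" "card K = clique_number E V2" using clique_ex[OF fV2, of E] by blast
      have "card K \<le> 1"
      proof (rule ccontr)
        assume "\<not> card K \<le> 1"
        have fK: "finite K" by (rule finite_subset[OF _ fV2]) (use K(1) in \<open>simp add: is_clique_def\<close>)
        have "\<not> (\<forall>a\<in>K. \<forall>b\<in>K. a = b)" using card_le_Suc0_iff_eq[OF fK] \<open>\<not> card K \<le> 1\<close> by simp
        then obtain a b where "a \<in> K" "b \<in> K" "a \<noteq> b" by blast
        then have "E a b" using K(1) unfolding is_clique_def by blast
        moreover have "a \<in> W" "b \<in> W" using K(1) \<open>a \<in> K\<close> \<open>b \<in> K\<close> unfolding is_clique_def W_def by auto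
        ultimately show False using False unfolding has_edge_def by blast
      qed
      thus "clique_number E V2 < clique_number E V" using K two by linarith
    qed
    thus False using nogood by blast
  qed
qed

end
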